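(* Let $\kappa>0$, $\beta>0$, $\lambda>0$ and $U\neq0$ be real. Suppose $(Q,P,X,Z)\in\mathbb{R}^4$ with $Q\neq0$ satisfies \begin{align*} P-\kappa Q+sP&=0,\\ Q+2\sqrt2\,\lambda X+sQ+\kappa P&=0,\\ X-2\sqrt2\,\frac{\lambda}{\beta}\,ZQ&=0,\\ X^2+Z^2&=\tfrac14, \end{align*} where $s:=\frac U2(Q^2+P^2)$. Then $s\neq-1$, $$P=\frac{\kappa}{1+s}Q,\qquad X=\frac{2\sqrt2\,\lambda Q}{\beta}Z,\qquad Z=-\frac{\beta}{8\lambda^2}\,\frac{(s+1)^2+\kappa^2}{s+1},$$ $$Q^2=\frac{2s(s+1)^2}{U\big[(s+1)^2+\kappa^2\big]},\qquad P^2=\frac{2s\kappa^2}{U\big[(s+1)^2+\kappa^2\big]},$$ and $s$ is a root of $$f(s)=\big((s+1)^2+\kappa^2\big)\Big[\frac1U\,s(s+1)^2+\frac{\beta^2}{16\lambda^2}\big((s+1)^2+\kappa^2\big)\Big]-\lambda^2(s+1)^2 .$$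
   Context: These are the steady-state mean-field equations (with $Y=0$) of the dissipative quantum Rabi model with Kerr nonlinearity, written in normalized units: $\kappa$ and $\lambda$ stand for $\kappa/\omega_c$ and $\lambda/\omega_c$, $\beta=\omega_a/\omega_c$, $U=2KN/\omega_c$, and $s=U|\alpha|^2$ with $|\alpha|^2=(Q^2+P^2)/2$. Solutions with $Q\neq0$ are the superradiant steady states. *)

theory Defs
  imports Complex_Main
begin

end

theory Submission
  imports Defs
begin

lemma helperX:
  fixes A b l U s t :: real
  assumes "A > 0" "b > 0" "l > 0" "U \<noteq> 0" "t \<noteq> 0"
  shows "8 * l^2 / b^2 * (2 * s * t^2 / (U * A)) * (b^2 / (64 * l^4) * A^2 / t^2) = s * A / (4 * U * l^2)"
proof -
  have "l^4 = l^2 * l^2" by algebra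
  then show ?thesis using assms by (simp add: field_simps power2_eq_square)
qed

lemma helperF:
  fixes A b l U s t :: real
  assumes "b > 0" "l > 0" "U \<noteq> 0" "t \<noteq> 0"
    and "s * A / (4 * U * l^2) + b^2 / (64 * l^4) * A^2 / t^2 = 1/4"
  shows "A * (1 / U * s * t^2 + b^2 / (16 * l^2) * A) - l^2 * t^2 = 0"
proof -
  have l4: "l^4 = l^2 * l^2" by algebra
  have "(s * A / (4 * U * l^2) + b^2 / (64 * l^4) * A^2 / t^2) * (4 * l^2 * t^2) = l^2 * t^2"
    by (subst assms(5)) simp
  moreover have "(s * A / (4 * U * l^2) + b^2 / (64 * l^4) * A^2 / t^2) * (4 * l^2 * t^2)
     = A * (1 / U * s * t^2 + b^2 / (16 * l^2) * A)"
    using assms(1-4) unfolding l4 by (simp add: field_simps power2_eq_square)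
  ultimately show ?thesis by linarith
qed

theorem mainTheorem3:
  fixes kap bet lam U Q P X Z s :: real
  assumes "kap > 0" and "bet > 0" and "lam > 0" and "U \<noteq> 0"
    and "Q \<noteq> 0"
    and s_def: "s = U / 2 * (Q^2 + P^2)"
    and e1: "P - kap * Q + s * P = 0"
    and e2: "Q + 2 * sqrt 2 * lam * X + s * Q + kap * P = 0"
    and e3: "X - 2 * sqrt 2 * (lam / bet) * Z * Q = 0"
    and e4: "X^2 + Z^2 = 1/4"
  shows "s \<noteq> -1
    \<and> P = kap / (1 + s) * Q
    \<and> X = 2 * sqrt 2 * lam * Q / bet * Z
    \<and> Z = - (bet / (8 * lam^2)) * (((s + 1)^2 + kap^2) / (s + 1))
    \<and> Q^2 = 2 * s * (s + 1)^2 / (U * ((s + 1)^2 + kap^2))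
    \<and> P^2 = 2 * s * kap^2 / (U * ((s + 1)^2 + kap^2))
    \<and> ((s + 1)^2 + kap^2) * (1 / U * s * (s + 1)^2
        + bet^2 / (16 * lam^2) * ((s + 1)^2 + kap^2)) - lam^2 * (s + 1)^2 = 0"
proof -
  define t where "t = s + 1"
  have k2: "kap^2 > 0" using assms(1) by simp
  have tP: "t * P = kap * Q" using e1 unfolding t_def by (simp add: algebra_simps)
  have t0: "t \<noteq> 0"
  proof
    assume "t = 0" then have "kap * Q = 0" using tP by simp
    then show False using assms(1,5) by simp
  qed
  have Pe: "P = kap / t * Q" using tP t0 by (simp add: field_simps)
  have Xe: "X = 2 * sqrt 2 * lam * Q / bet * Z" using e3 by (simp add: field_simps)
  have s2: "sqrt 2 * sqrt 2 = (2::real)" by simp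
  have "t * Q + kap * P + 2 * sqrt 2 * lam * X = 0" using e2 unfolding t_def by (simp add: algebra_simps)
  then have "t * Q + kap * (kap / t * Q) + 2 * sqrt 2 * lam * (2 * sqrt 2 * lam * Q / bet * Z) = 0"
    using Pe Xe by simp
  then have "Q * ((t^2 + kap^2) / t + 8 * lam^2 / bet * Z) = 0"
    using t0 assms(2) s2 by (simp add: field_simps power2_eq_square)
  then have "(t^2 + kap^2) / t + 8 * lam^2 / bet * Z = 0" using assms(5) by simp
  then have Ze: "Z = - (bet / (8 * lam^2)) * ((t^2 + kap^2) / t)"
    using assms(2,3) t0 by (simp add: field_simps)
  have pos: "t^2 + kap^2 > 0" using k2 by (simp add: add_nonneg_pos)
  have sQ: "s = U / 2 * Q^2 * ((t^2 + kap^2) / t^2)" using s_def Pe t0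
    by (simp add: field_simps power2_eq_square)
  then have Qe: "Q^2 = 2 * s * t^2 / (U * (t^2 + kap^2))"
  proof -
    have "U * (t^2 + kap^2) \<noteq> 0" using assms(4) pos using mult_eq_0_iff less_irrefl by metis
    then show ?thesis using sQ t0 by (simp add: field_simps)
  qed
  have Pe2: "P^2 = 2 * s * kap^2 / (U * (t^2 + kap^2))"
  proof -
    have "P^2 = kap^2 / t^2 * Q^2" using Pe by (simp add: power_mult_distrib power_divide)
    also have "... = 2 * s * kap^2 / (U * (t^2 + kap^2))" unfolding Qe using t0 by simp
    finally show ?thesis .
  qed
  have X2: "X^2 = 8 * lam^2 / bet^2 * Q^2 * Z^2"
    using Xe s2 by (simp add: power_mult_distrib power_divide)
  have Z2: "Z^2 = bet^2 / (64 * lam^4) * (t^2 + kap^2)^2 / t^2"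
    using Ze by (simp add: power_mult_distrib power_divide field_simps) (simp add: algebra_simps power2_eq_square power4_eq_xxxx)
  have X2': "X^2 = s * (t^2 + kap^2) / (4 * U * lam^2)"
    unfolding X2 Z2 Qe using helperX[OF pos assms(2,3,4) t0] by simp
  have "s * (t^2 + kap^2) / (4 * U * lam^2) + bet^2 / (64 * lam^4) * (t^2 + kap^2)^2 / t^2 = 1/4"
    using e4 X2' Z2 by simp
  then have F: "(t^2 + kap^2) * (1 / U * s * t^2 + bet^2 / (16 * lam^2) * (t^2 + kap^2)) - lam^2 * t^2 = 0"
    using helperF[OF assms(2,3,4) t0] by blast
  show ?thesis using t0 Pe Xe Ze Qe Pe2 F unfolding t_def by (simp add: add.commute)
qed

end
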